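(* Let $n\ge 2$ and let $G\le S_n$ be a permutation group on an $n$-set $\Omega$. The following are equivalent: (1) for every transformation $t\in T_n$ of rank $2$, the semigroup $\langle G,t\rangle$ satisfies $\langle G,t\rangle=EG$, where $E$ is the set of idempotents of $\langle G,t\rangle$ (i.e. $\langle G,t\rangle$ is strongly factorizable); (2) $G$ is primitive.
   Context: $T_n$ is the full transformation monoid on $\Omega$ and $S_n$ the symmetric group on $\Omega$; maps act on the right and are composed left to right. The rank of $t\in T_n$ is $|\Omega t|$. $\langle G,t\rangle$ denotes the subsemigroup of $T_n$ generated by $G\cup\{t\}$, and $EG=\{eg: e\in E,\ g\in G\}$. *)

theory Defs
  imports "HOL-Combinatorics.Permutations"
begin

text \<open>Maps act on the right and are
composed left to right: the product s t means first s, then t.\<close>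

definition transformation :: "'a set \<Rightarrow> ('a \<Rightarrow> 'a) \<Rightarrow> bool" where
  "transformation \<Omega> t \<longleftrightarrow> t ` \<Omega> \<subseteq> \<Omega> \<and> (\<forall>x. x \<notin> \<Omega> \<longrightarrow> t x = x)"

definition rank_on :: "'a set \<Rightarrow> ('a \<Rightarrow> 'a) \<Rightarrow> nat" where
  "rank_on \<Omega> t = card (t ` \<Omega>)"

definition rcomp :: "('a \<Rightarrow> 'a) \<Rightarrow> ('a \<Rightarrow> 'a) \<Rightarrow> ('a \<Rightarrow> 'a)" (infixl "\<cdot>" 70) where
  "s \<cdot> t = t \<circ> s"

inductive_set sgen :: "('a \<Rightarrow> 'a) set \<Rightarrow> ('a \<Rightarrow> 'a) set" for A where
  base: "a \<in> A \<Longrightarrow> a \<in> sgen A"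
| step: "a \<in> sgen A \<Longrightarrow> b \<in> sgen A \<Longrightarrow> a \<cdot> b \<in> sgen A"

definition idempotents :: "('a \<Rightarrow> 'a) set \<Rightarrow> ('a \<Rightarrow> 'a) set" where
  "idempotents S = {e \<in> S. e \<cdot> e = e}"

definition setprod :: "('a \<Rightarrow> 'a) set \<Rightarrow> ('a \<Rightarrow> 'a) set \<Rightarrow> ('a \<Rightarrow> 'a) set" where
  "setprod E G = {e \<cdot> g | e g. e \<in> E \<and> g \<in> G}"

definition perm_group :: "'a set \<Rightarrow> ('a \<Rightarrow> 'a) set \<Rightarrow> bool" where
  "perm_group \<Omega> G \<longleftrightarrow> (\<forall>g\<in>G. g permutes \<Omega>) \<and> id \<in> G \<and>
     (\<forall>g\<in>G. \<forall>h\<in>G. g \<cdot> h \<in> G) \<and> (\<forall>g\<in>G. inv g \<in> G)"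

definition transitive_on :: "'a set \<Rightarrow> ('a \<Rightarrow> 'a) set \<Rightarrow> bool" where
  "transitive_on \<Omega> G \<longleftrightarrow> (\<forall>x\<in>\<Omega>. \<forall>y\<in>\<Omega>. \<exists>g\<in>G. g x = y)"

definition is_block :: "'a set \<Rightarrow> ('a \<Rightarrow> 'a) set \<Rightarrow> 'a set \<Rightarrow> bool" where
  "is_block \<Omega> G B \<longleftrightarrow> B \<subseteq> \<Omega> \<and> (\<forall>g\<in>G. g ` B = B \<or> g ` B \<inter> B = {})"

definition primitive :: "'a set \<Rightarrow> ('a \<Rightarrow> 'a) set \<Rightarrow> bool" where
  "primitive \<Omega> G \<longleftrightarrow> transitive_on \<Omega> G \<and>
     (\<forall>B. is_block \<Omega> G B \<longrightarrow> card B \<le> 1 \<or> B = \<Omega>)"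

end

theory Submission
  imports Defs
begin

definition edg :: "('a \<Rightarrow> 'a) set \<Rightarrow> 'a \<Rightarrow> 'a \<Rightarrow> ('a \<times> 'a) set" where
  "edg G a b = {(h a, h b) | h. h \<in> G}"

lemma pg_perm: "perm_group \<Omega> G \<Longrightarrow> g \<in> G \<Longrightarrow> g permutes \<Omega>"
  by (simp add: perm_group_def)
lemma pg_inv: "perm_group \<Omega> G \<Longrightarrow> g \<in> G \<Longrightarrow> inv g \<in> G"
  by (simp add: perm_group_def)
lemma pg_id: "perm_group \<Omega> G \<Longrightarrow> id \<in> G"
  by (simp add: perm_group_def)
lemma pg_comp: "perm_group \<Omega> G \<Longrightarrow> g \<in> G \<Longrightarrow> h \<in> G \<Longrightarrow> h \<circ> g \<in> G"
  unfolding perm_group_def rcomp_def by blast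

lemma pg_trans: "perm_group \<Omega> G \<Longrightarrow> g \<in> G \<Longrightarrow> transformation \<Omega> g"
  using pg_perm[of \<Omega> G g]
  by (auto simp: transformation_def permutes_in_image permutes_not_in)

lemma E_inv:
  assumes pg: "perm_group \<Omega> G" and g: "g \<in> G" and xy: "(x,y) \<in> (edg G a b)\<^sup>*"
  shows "(g x, g y) \<in> (edg G a b)\<^sup>*"
  using xy
proof (induction rule: rtrancl_induct)
  case base then show ?case by simp
next
  case (step y z)
  then obtain h where h: "h \<in> G" "y = h a" "z = h b" by (auto simp: edg_def)
  have "g \<circ> h \<in> G" using pg_comp[OF pg h(1) g] .
  moreover have "(g y, g z) = ((g \<circ> h) a, (g \<circ> h) b)" using h by simp
  ultimately have "(g y, g z) \<in> edg G a b" unfolding edg_def by blast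
  with step show ?case by (meson rtrancl_into_rtrancl)
qed

lemma pow_in:
  assumes pg: "perm_group \<Omega> G" and g: "g \<in> G"
  shows "g ^^ i \<in> G"
proof (induction i)
  case 0 then show ?case using pg_id[OF pg] by (simp add: id_def)
next
  case (Suc i) then show ?case using pg_comp[OF pg Suc g] by (metis funpow.simps(2))
qed

lemma E_chain:
  assumes pg: "perm_group \<Omega> G" and g: "g \<in> G" and gab: "g a = b"
  shows "((g^^i) a, (g^^(i+k)) a) \<in> (edg G a b)\<^sup>*"
proof (induction k)
  case 0 then show ?case by simp
next
  case (Suc k)
  have "(g^^(i+k)) \<in> G" using pow_in[OF pg g] .
  moreover have "(g^^(i+Suc k)) a = (g^^(i+k)) b"
    using gab by (simp add: funpow_Suc_right del: funpow.simps)
  ultimately have "((g^^(i+k)) a, (g^^(i+Suc k)) a) \<in> edg G a b"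
    unfolding edg_def by force
  with Suc show ?case by (meson rtrancl_into_rtrancl)
qed

lemma return_pow:
  assumes fin: "finite \<Omega>" and pg: "perm_group \<Omega> G" and g: "g \<in> G" and a: "a \<in> \<Omega>"
  shows "\<exists>m\<ge>1. (g^^m) a = a"
proof -
  define f where "f i = (g^^i) a" for i
  have fi: "f i \<in> \<Omega>" for i
    unfolding f_def using pg_perm[OF pg pow_in[OF pg g]] a by (simp add: permutes_in_image)
  have "\<not> inj_on f {0..card \<Omega>}"
  proof
    assume "inj_on f {0..card \<Omega>}"
    then have "card {0..card \<Omega>} \<le> card \<Omega>"
      using card_inj_on_le[of f "{0..card \<Omega>}" \<Omega>] fi fin by auto
    then show False by simp
  qed
  then obtain i j where ij: "i \<noteq> j" "f i = f j" unfolding inj_on_def by blast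
  have key: "\<exists>m\<ge>1. (g^^m) a = a" if "i < j" "f i = f j" for i j
  proof -
    have "(g^^i) ((g^^(j-i)) a) = (g^^(i+(j-i))) a"
      by (simp add: funpow_add)
    also have "\<dots> = (g^^i) a" using that by (simp add: f_def)
    finally have "(g^^i) ((g^^(j-i)) a) = (g^^i) a" .
    moreover have "inj (g^^i)" using pg_perm[OF pg pow_in[OF pg g]] by (rule permutes_inj)
    ultimately have "(g^^(j-i)) a = a" by (meson injD)
    then show ?thesis using that by (intro exI[of _ "j-i"]) auto
  qed
  show ?thesis
  proof (cases "i < j")
    case True show ?thesis by (rule key[OF True ij(2)])
  next
    case False then have "j < i" using ij by auto
    then show ?thesis using key[OF _ ij(2)[symmetric]] by blast
  qed
qed

lemma E_sym:
  assumes fin: "finite \<Omega>" and pg: "perm_group \<Omega> G" and tr: "transitive_on \<Omega> G"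
    and a: "a \<in> \<Omega>" and b: "b \<in> \<Omega>" and xy: "(x,y) \<in> edg G a b"
  shows "(y,x) \<in> (edg G a b)\<^sup>*"
proof -
  obtain g where g: "g \<in> G" "g a = b" using tr a b unfolding transitive_on_def by blast
  obtain m where m: "m \<ge> 1" "(g^^m) a = a" using return_pow[OF fin pg g(1) a] by blast
  have "((g^^1) a, (g^^(1 + (m-1))) a) \<in> (edg G a b)\<^sup>*" using E_chain[OF pg g] .
  then have ba: "(b, a) \<in> (edg G a b)\<^sup>*" using m g by simp
  obtain h where h: "h \<in> G" "x = h a" "y = h b" using xy by (auto simp: edg_def)
  show ?thesis using E_inv[OF pg h(1) ba] h by simp
qed

lemma E_sym_rt:
  assumes fin: "finite \<Omega>" and pg: "perm_group \<Omega> G" and tr: "transitive_on \<Omega> G"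
    and a: "a \<in> \<Omega>" and b: "b \<in> \<Omega>" and xy: "(x,y) \<in> (edg G a b)\<^sup>*"
  shows "(y,x) \<in> (edg G a b)\<^sup>*"
  using xy
proof (induction rule: rtrancl_induct)
  case base then show ?case by simp
next
  case (step y z)
  have "(z,y) \<in> (edg G a b)\<^sup>*" using E_sym[OF fin pg tr a b step(2)] .
  with step(3) show ?case by (meson rtrancl_trans)
qed

lemma cross:
  assumes "(x,y) \<in> R\<^sup>*" "x \<in> C" "y \<notin> C"
  shows "\<exists>u v. (u,v) \<in> R \<and> u \<in> C \<and> v \<notin> C"
  using assms
proof (induction rule: rtrancl_induct)
  case base then show ?case by simp
next
  case (step y z)
  then show ?case by (cases "y \<in> C") auto
qed

lemma main:
  assumes fin: "finite \<Omega>" and pg: "perm_group \<Omega> G" and pr: "primitive \<Omega> G"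
    and a: "a \<in> \<Omega>" and b: "b \<in> \<Omega>" and ab: "a \<noteq> b"
    and c: "c \<in> C" and C: "C \<subseteq> \<Omega>" and d: "d \<in> \<Omega>" "d \<notin> C"
  shows "\<exists>h\<in>G. h a \<in> C \<and> h b \<notin> C"
proof -
  have tr: "transitive_on \<Omega> G" using pr by (simp add: primitive_def)
  let ?R = "(edg G a b)\<^sup>*"
  define K where "K = {x \<in> \<Omega>. (a,x) \<in> ?R}"
  have Km: "y \<in> K \<longleftrightarrow> y \<in> \<Omega> \<and> (a,y) \<in> ?R" for y by (simp add: K_def)
  have symR: "(u,v) \<in> ?R \<Longrightarrow> (v,u) \<in> ?R" for u v by (rule E_sym_rt[OF fin pg tr a b])
  have sub: "g ` K \<subseteq> K" if g: "g \<in> G" and x: "x \<in> K" "g x \<in> K" for g x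
  proof
    fix z assume "z \<in> g ` K"
    then obtain y where y: "y \<in> K" "z = g y" by blast
    have ax: "(a,x) \<in> ?R" using x(1) Km by blast
    have ay: "(a,y) \<in> ?R" using y(1) Km by blast
    have agx: "(a,g x) \<in> ?R" using x(2) Km by blast
    have "(x, a) \<in> ?R" using symR[OF ax] .
    then have "(x,y) \<in> ?R" using ay by (rule rtrancl_trans)
    then have "(g x, g y) \<in> ?R" by (rule E_inv[OF pg g])
    then have "(a, g y) \<in> ?R" using agx by (rule rtrancl_trans[rotated])
    moreover have "g y \<in> \<Omega>" using y(1) Km pg_perm[OF pg g] by (simp add: permutes_in_image)
    ultimately show "z \<in> K" using y(2) Km by simp
  qed
  have blk: "is_block \<Omega> G K"
    unfolding is_block_def
  proof (intro conjI ballI)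
    show "K \<subseteq> \<Omega>" using K_def by auto
  next
    fix g assume g: "g \<in> G"
    show "g ` K = K \<or> g ` K \<inter> K = {}"
    proof (cases "g ` K \<inter> K = {}")
      case False
      then obtain x where x: "x \<in> K" "g x \<in> K" by blast
      have s1: "g ` K \<subseteq> K" using sub[OF g x] .
      have "inv g (g x) = x" using pg_perm[OF pg g] by (simp add: permutes_inverses)
      then have s2: "inv g ` K \<subseteq> K" using sub[OF pg_inv[OF pg g] x(2)] x by simp
      have "K \<subseteq> g ` K"
      proof
        fix y assume "y \<in> K"
        then have "inv g y \<in> K" using s2 by blast
        moreover have "g (inv g y) = y" using pg_perm[OF pg g] by (simp add: permutes_inverses)
        ultimately show "y \<in> g ` K" by (metis imageI)
      qed
      then show ?thesis using s1 by blast
    qed simp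
  qed
  have aK: "a \<in> K" using a K_def by simp
  have "(a,b) \<in> edg G a b" unfolding edg_def
    by (rule CollectI, rule exI[of _ id]) (simp add: pg_id[OF pg])
  then have bK: "b \<in> K" using b K_def by auto
  have "finite K" using fin K_def by simp
  then have "card {a,b} \<le> card K" using aK bK by (intro card_mono) auto
  then have "card K \<ge> 2" using ab by simp
  then have "K = \<Omega>" using pr blk unfolding primitive_def by auto
  then have ac: "(a,c) \<in> ?R" and ad: "(a,d) \<in> ?R" using c C d Km by auto
  have "(c,d) \<in> ?R" using symR[OF ac] ad by (rule rtrancl_trans)
  then obtain u v where "(u,v) \<in> edg G a b" "u \<in> C" "v \<notin> C" using cross[of c d _ C] c d(2) by blast
  then show ?thesis unfolding edg_def by auto
qed

lemma bad:
  assumes fin: "finite \<Omega>" and pg: "perm_group \<Omega> G"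
    and a: "a \<in> \<Omega>" and b: "b \<in> \<Omega>" and ab: "a \<noteq> b"
    and c: "c \<in> C" and C: "C \<subseteq> \<Omega>" and d: "d \<in> \<Omega>" "d \<notin> C"
    and no: "\<forall>h\<in>G. \<not> (h a \<in> C \<and> h b \<notin> C)"
  shows "\<exists>t. transformation \<Omega> t \<and> rank_on \<Omega> t = 2 \<and>
            sgen (insert t G) \<noteq> setprod (idempotents (sgen (insert t G))) G"
proof -
  define t where "t x = (if x \<in> C then a else if x \<in> \<Omega> then b else x)" for x
  have tr: "transformation \<Omega> t" using a b C unfolding transformation_def t_def by auto
  have "t ` \<Omega> = {a,b}"
  proof
    show "t ` \<Omega> \<subseteq> {a,b}" unfolding t_def by auto
    have "t c = a" "t d = b" using c d unfolding t_def by auto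
    then show "{a,b} \<subseteq> t ` \<Omega>" using c C d by (metis empty_subsetI image_eqI insert_subset subsetD)
  qed
  then have rk: "rank_on \<Omega> t = 2" using ab by (simp add: rank_on_def)
  have tS: "t \<in> sgen (insert t G)" by (simp add: sgen.base)
  have "t \<notin> setprod (idempotents (sgen (insert t G))) G"
  proof
    assume "t \<in> setprod (idempotents (sgen (insert t G))) G"
    then obtain e g where eg: "t = g \<circ> e" "e \<cdot> e = e" "g \<in> G"
      unfolding setprod_def idempotents_def rcomp_def by blast
    let ?h = "inv g"
    have gp: "g permutes \<Omega>" using pg_perm[OF pg eg(3)] .
    have e: "e x = ?h (t x)" for x using eg(1) gp by (simp add: permutes_inverses)
    have idem: "e (e x) = e x" for x using eg(2) unfolding rcomp_def by (metis comp_apply)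
    have hinj: "inj ?h" using pg_perm[OF pg pg_inv[OF pg eg(3)]] by (rule permutes_inj)
    have hp: "?h permutes \<Omega>" using pg_perm[OF pg pg_inv[OF pg eg(3)]] .
    have "e (e c) = e c" by (rule idem)
    then have "?h (t (?h a)) = ?h a" using e c unfolding t_def by simp
    then have "t (?h a) = a" using hinj by (meson injD)
    moreover have "?h a \<in> \<Omega>" using hp a by (simp add: permutes_in_image)
    ultimately have ha: "?h a \<in> C" using ab unfolding t_def by (auto split: if_splits)
    have "e (e d) = e d" by (rule idem)
    then have "?h (t (?h b)) = ?h b" using e d unfolding t_def by simp
    then have "t (?h b) = b" using hinj by (meson injD)
    then have hb: "?h b \<notin> C" using ab unfolding t_def by (auto split: if_splits)
    show False using no pg_inv[OF pg eg(3)] ha hb by blast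
  qed
  then show ?thesis using tr rk tS by blast
qed

lemma shape:
  assumes pg: "perm_group \<Omega> G" and fin: "finite \<Omega>" and tt: "transformation \<Omega> t" "rank_on \<Omega> t = 2"
    and s: "s \<in> sgen (insert t G)"
  shows "s \<in> G \<or> (transformation \<Omega> s \<and> card (s ` \<Omega>) \<le> 2)"
  using s
proof (induction rule: sgen.induct)
  case (base a) then show ?case using tt by (auto simp: rank_on_def)
next
  case (step x y)
  have tx: "transformation \<Omega> x" and ty: "transformation \<Omega> y"
    using step pg_trans[OF pg] by auto
  have trc: "transformation \<Omega> (x \<cdot> y)" using tx ty
    unfolding transformation_def rcomp_def by auto
  show ?case
  proof (cases "x \<in> G \<and> y \<in> G")
    case True then show ?thesis using pg unfolding perm_group_def by blast
  next
    case False
    then have "card (x ` \<Omega>) \<le> 2 \<or> card (y ` \<Omega>) \<le> 2" using step by blast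
    moreover have "card ((x \<cdot> y) ` \<Omega>) \<le> card (x ` \<Omega>)"
      unfolding rcomp_def image_comp[symmetric] using fin by (simp add: card_image_le)
    moreover have "card ((x \<cdot> y) ` \<Omega>) \<le> card (y ` \<Omega>)"
    proof -
      have "(x \<cdot> y) ` \<Omega> \<subseteq> y ` \<Omega>" using tx unfolding rcomp_def transformation_def by auto
      then show ?thesis using fin by (simp add: card_mono)
    qed
    ultimately show ?thesis using trc by linarith
  qed
qed

lemma dir1:
  fixes \<Omega> :: "'a set" and G :: "('a \<Rightarrow> 'a) set"
  assumes "finite \<Omega>" and "card \<Omega> \<ge> 2" and "perm_group \<Omega> G"
  and H: "\<forall>t. transformation \<Omega> t \<and> rank_on \<Omega> t = 2 \<longrightarrow>
            sgen (insert t G) = setprod (idempotents (sgen (insert t G))) G"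
  shows "primitive \<Omega> G"
proof -
  note fin = assms(1) and pg = assms(3)
  show "primitive \<Omega> G"
  proof (rule ccontr)
    assume np: "\<not> primitive \<Omega> G"
    have "\<exists>a b c d C. a \<in> \<Omega> \<and> b \<in> \<Omega> \<and> a \<noteq> b \<and> c \<in> C \<and> C \<subseteq> \<Omega> \<and> d \<in> \<Omega> \<and> d \<notin> C
       \<and> (\<forall>h\<in>G. \<not> (h a \<in> C \<and> h b \<notin> C))"
    proof (cases "transitive_on \<Omega> G")
      case False
      then obtain x y where xy: "x \<in> \<Omega>" "y \<in> \<Omega>" "\<forall>g\<in>G. g x \<noteq> y"
        unfolding transitive_on_def by blast
      define C where "C = \<Omega> - {g x | g. g \<in> G}"
      have idG: "id \<in> G" using pg_id[OF pg] .
      have "x \<noteq> y" using xy idG by force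
      moreover have "y \<in> C" using xy C_def by auto
      moreover have "x \<notin> C" using idG C_def by force
      moreover have "\<forall>h\<in>G. \<not> (h x \<in> C \<and> h y \<notin> C)" using C_def by auto
      moreover have "C \<subseteq> \<Omega>" using C_def by auto
      ultimately have F: "x \<noteq> y \<and> y \<in> C \<and> x \<notin> C \<and> (\<forall>h\<in>G. \<not> (h x \<in> C \<and> h y \<notin> C)) \<and> C \<subseteq> \<Omega>" by blast
      show ?thesis
        apply (rule exI[of _ x], rule exI[of _ y], rule exI[of _ y], rule exI[of _ x], rule exI[of _ C])
        using F xy(1,2) by simp
    next
      case True
      then obtain B where B: "is_block \<Omega> G B" "\<not> card B \<le> 1" "B \<noteq> \<Omega>"
        using np unfolding primitive_def by blast
      have BO: "B \<subseteq> \<Omega>" using B(1) by (simp add: is_block_def)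
      then have "finite B" using fin finite_subset by blast
      then have "\<not> (\<forall>a\<in>B. \<forall>b\<in>B. a = b)" using B(2) card_le_Suc0_iff_eq by fastforce
      then obtain a b where ab: "a \<in> B" "b \<in> B" "a \<noteq> b" by blast
      obtain d where d: "d \<in> \<Omega>" "d \<notin> B" using BO B(3) by blast
      have "\<forall>h\<in>G. \<not> (h a \<in> B \<and> h b \<notin> B)"
      proof (intro ballI notI)
        fix h assume h: "h \<in> G" "h a \<in> B \<and> h b \<notin> B"
        then have "h ` B \<inter> B \<noteq> {}" using ab by blast
        then have "h ` B = B" using B(1) h(1) unfolding is_block_def by blast
        then show False using h ab by blast
      qed
      moreover have "a \<in> \<Omega>" "b \<in> \<Omega>" using ab BO by auto
      ultimately have F: "(\<forall>h\<in>G. \<not> (h a \<in> B \<and> h b \<notin> B)) \<and> a \<in> \<Omega> \<and> b \<in> \<Omega>" by blast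
      show ?thesis
        apply (rule exI[of _ a], rule exI[of _ b], rule exI[of _ a], rule exI[of _ d], rule exI[of _ B])
        using F ab d BO by simp
    qed
    then obtain a b c d C where abcd: "a \<in> \<Omega>" "b \<in> \<Omega>" "a \<noteq> b" "c \<in> C" "C \<subseteq> \<Omega>" "d \<in> \<Omega>" "d \<notin> C"
       "\<forall>h\<in>G. \<not> (h a \<in> C \<and> h b \<notin> C)" by blast
    obtain t where t: "transformation \<Omega> t" "rank_on \<Omega> t = 2"
      "sgen (insert t G) \<noteq> setprod (idempotents (sgen (insert t G))) G"
      using bad[OF fin pg abcd] by blast
    have "sgen (insert t G) = setprod (idempotents (sgen (insert t G))) G" using H[rule_format, OF conjI[OF t(1) t(2)]] .
    then show False using t(3) by simp
  qed
qed

lemma dir2: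
  fixes \<Omega> :: "'a set" and G :: "('a \<Rightarrow> 'a) set"
  assumes "finite \<Omega>" and "card \<Omega> \<ge> 2" and "perm_group \<Omega> G"
  and pr: "primitive \<Omega> G"
  shows "\<forall>t. transformation \<Omega> t \<and> rank_on \<Omega> t = 2 \<longrightarrow>
            sgen (insert t G) = setprod (idempotents (sgen (insert t G))) G"
proof -
  note fin = assms(1) and pg = assms(3)
  show "\<forall>t. transformation \<Omega> t \<and> rank_on \<Omega> t = 2 \<longrightarrow>
            sgen (insert t G) = setprod (idempotents (sgen (insert t G))) G"
  proof (intro allI impI)
    fix t assume tt: "transformation \<Omega> t \<and> rank_on \<Omega> t = 2"
    let ?S = "sgen (insert t G)"
    have GS: "g \<in> ?S" if "g \<in> G" for g using that by (simp add: sgen.base)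
    show "?S = setprod (idempotents ?S) G"
    proof
      show "setprod (idempotents ?S) G \<subseteq> ?S"
      proof
        fix x assume "x \<in> setprod (idempotents ?S) G"
        then obtain e g where "x = e \<cdot> g" "e \<in> ?S" "g \<in> G"
          unfolding setprod_def idempotents_def by blast
        then show "x \<in> ?S" using GS sgen.step by metis
      qed
    next
      show "?S \<subseteq> setprod (idempotents ?S) G"
      proof
        fix s assume sS: "s \<in> ?S"
        have sh: "s \<in> G \<or> (transformation \<Omega> s \<and> card (s ` \<Omega>) \<le> 2)"
          using shape[OF pg fin _ _ sS] tt by blast
        have idG: "id \<in> G" using pg_id[OF pg] .
        show "s \<in> setprod (idempotents ?S) G"
        proof (cases "s \<in> G")
          case True
          have "id \<in> idempotents ?S" using GS[OF idG] by (simp add: idempotents_def rcomp_def)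
          moreover have "s = id \<cdot> s" by (simp add: rcomp_def)
          ultimately show ?thesis using True unfolding setprod_def by blast
        next
          case False
          then have ts: "transformation \<Omega> s" and c2: "card (s ` \<Omega>) \<le> 2" using sh by auto
          have ne: "\<Omega> \<noteq> {}" using assms(2) by auto
          have fi: "finite (s ` \<Omega>)" using fin by simp
          then have "card (s ` \<Omega>) \<noteq> 0" using ne by simp
          then consider "card (s ` \<Omega>) = 1" | "card (s ` \<Omega>) = 2" using c2 by linarith
          then show ?thesis
          proof cases
            case 1
            then obtain c where c: "s ` \<Omega> = {c}" by (meson card_1_singletonE)
            have "s \<cdot> s = s"
            proof
              fix x show "(s \<cdot> s) x = s x"
              proof (cases "x \<in> \<Omega>")
                case True
                then have "s x = c" using c by blast
                moreover have "c \<in> \<Omega>" using c ts ne unfolding transformation_def by blast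
                ultimately show ?thesis using c by (auto simp: rcomp_def)
              next
                case False then show ?thesis using ts by (simp add: rcomp_def transformation_def)
              qed
            qed
            then have "s \<in> idempotents ?S" using sS by (simp add: idempotents_def)
            moreover have "s = s \<cdot> id" by (simp add: rcomp_def)
            ultimately show ?thesis using idG unfolding setprod_def by blast
          next
            case 2
            then obtain a b where ab: "s ` \<Omega> = {a,b}" "a \<noteq> b" by (meson card_2_iff)
            obtain c where c: "c \<in> \<Omega>" "s c = a" using ab by (metis imageE insertI1)
            obtain d where d: "d \<in> \<Omega>" "s d = b" using ab by (metis imageE insertI1 insert_commute)
            have aO: "a \<in> \<Omega>" "b \<in> \<Omega>" using ts ab unfolding transformation_def by auto
            define C where "C = {x \<in> \<Omega>. s x = a}"
            obtain h where h: "h \<in> G" "h a \<in> C" "h b \<notin> C"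
              using main[OF fin pg pr aO ab(2), of c C d] c d ab(2) C_def by auto
            have hp: "h permutes \<Omega>" using pg_perm[OF pg h(1)] .
            have hb: "h b \<in> \<Omega>" using hp aO by (simp add: permutes_in_image)
            have sha: "s (h a) = a" using h C_def by auto
            have shb: "s (h b) = b" using h hb C_def ab by auto
            define e where "e = s \<cdot> h"
            have eS: "e \<in> ?S" unfolding e_def using sS GS[OF h(1)] by (rule sgen.step)
            have "e \<cdot> e = e"
            proof
              fix x show "(e \<cdot> e) x = e x"
              proof (cases "x \<in> \<Omega>")
                case True
                then have "s x \<in> {a,b}" using ab by blast
                then show ?thesis using sha shb by (auto simp: e_def rcomp_def)
              next
                case False
                then have "s x = x" "h x = x" using ts hp
                  by (auto simp: transformation_def permutes_not_in)
                then show ?thesis by (simp add: e_def rcomp_def)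
              qed
            qed
            then have "e \<in> idempotents ?S" using eS by (simp add: idempotents_def)
            moreover have "s = e \<cdot> inv h"
              using hp by (simp add: e_def rcomp_def fun_eq_iff permutes_inverses)
            moreover have "inv h \<in> G" using pg_inv[OF pg h(1)] .
            ultimately show ?thesis unfolding setprod_def by blast
          qed
        qed
      qed
    qed
  qed
qed

theorem theorem1p1:
  fixes \<Omega> :: "'a set" and G :: "('a \<Rightarrow> 'a) set"
  assumes "finite \<Omega>" and "card \<Omega> \<ge> 2" and "perm_group \<Omega> G"
  shows "(\<forall>t. transformation \<Omega> t \<and> rank_on \<Omega> t = 2 \<longrightarrow>
            sgen (insert t G) = setprod (idempotents (sgen (insert t G))) G)
         \<longleftrightarrow> primitive \<Omega> G"
proof
  assume h: "\<forall>t. transformation \<Omega> t \<and> rank_on \<Omega> t = 2 \<longrightarrow>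
            sgen (insert t G) = setprod (idempotents (sgen (insert t G))) G"
  show "primitive \<Omega> G" by (rule dir1[OF assms h])
next
  assume h: "primitive \<Omega> G"
  show "\<forall>t. transformation \<Omega> t \<and> rank_on \<Omega> t = 2 \<longrightarrow>
            sgen (insert t G) = setprod (idempotents (sgen (insert t G))) G" by (rule dir2[OF assms h])
qed

end
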